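(* Let $d\ge2$, $n\ge1$, $\gamma$ a positive conductivity on the lattice graph below, and $d-1\le t\le dn-1$. For each node $p\in D\cup\partial D$ define $\mathbf v_p\in\mathbb R^{D\cup\partial D}$ by $(\mathbf v_p)_q=\gamma_{pq}$ if $q\in\mathcal N(p)$, $(\mathbf v_p)_p=-\sum_{r\in\mathcal N(p)}\gamma_{pr}$, and $(\mathbf v_p)_q=0$ otherwise. Then there is an orthogonal direct sum decomposition (with respect to the standard inner product) $$\mathcal U^{(t)}\oplus\operatorname{span}\{\mathbf v_p|_{L_t^{\mathcal S}\cup J_t^{\mathcal S}}:p\in L_{t+1}^{\mathcal S}\}=\mathbb R^{L_t^{\mathcal S}\cup J_t^{\mathcal S}}.$$
   Context: Lattice: $D=\{x\in\mathbb Z^d:1\le x_i\le n\ \forall i\}$, $\partial D=\{p\in\mathbb Z^d:\min_{q\in D}\|q-p\|_{\ell^1}=1\}$; $E$ = unordered pairs $pq\subseteq D\cup\partial D$ with $\|p-q\|_{\ell^1}=1$, not both in $\partial D$; $\mathcal N(p)=\{q:pq\in E\}$. Conductivity $\gamma:E\to(0,\infty)$, symmetric. $S_\gamma\varphi$ is the unique $\mathbf u\in\mathbb R^{D\cup\partial D}$ with $\sum_{q\in\mathcal N(p)}\gamma_{pq}(\mathbf u_q-\mathbf u_p)=0$ for all $p\in D$ and $\mathbf u=\varphi$ on $\partial D$. Functions on subsets are extended by zero. With $s(x)=\sum_ix_i$: $L_t=\{x\in D:s(x)=t\}$, $L_t^{\mathcal S}=\{x\in D:s(x)\le t\}$, $K_t^+=\{x\in\partial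 D:s(x)=t,\max_ix_i=n+1\}$, $K_t^-=\{x\in\partial D:s(x)=t,\min_ix_i=0\}$, $K_t^{\mathcal S\pm}=\bigcup_{\ell\le t}K_\ell^\pm$, $J_t^{\mathcal S}=K_t^{\mathcal S-}\cup K_{t+1}^{\mathcal S+}$. $T_1^{(t)}:\mathbb R^{J_t^{\mathcal S}}\to\mathbb R^{L_{t+1}}$, $\varphi\mapsto(S_\gamma\varphi)|_{L_{t+1}}$. $\mathcal U^{(t)}=\{(S_\gamma\varphi)|_{J_t^{\mathcal S}\cup L_t^{\mathcal S}}:\varphi\in\ker T_1^{(t)}\}\subseteq\mathbb R^{J_t^{\mathcal S}\cup L_t^{\mathcal S}}$. *)

theory Defs
  imports "HOL-Analysis.Analysis"
begin

text \<open>Lattice points of Z^d are represented as functions nat => int that vanish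
  at all indices >= d (coordinates are indexed 0..d-1).\<close>
type_synonym pt = "nat \<Rightarrow> int"

definition l1dist :: "nat \<Rightarrow> pt \<Rightarrow> pt \<Rightarrow> int" where
  "l1dist d p q = (\<Sum>i<d. \<bar>p i - q i\<bar>)"

definition Dom :: "nat \<Rightarrow> nat \<Rightarrow> pt set" where
  "Dom d n = {x. (\<forall>i<d. 1 \<le> x i \<and> x i \<le> int n) \<and> (\<forall>i\<ge>d. x i = 0)}"

definition Bdry :: "nat \<Rightarrow> nat \<Rightarrow> pt set" where
  "Bdry d n = {p. (\<forall>i\<ge>d. p i = 0) \<and>
      (\<exists>q\<in>Dom d n. l1dist d q p = 1) \<and> (\<forall>q\<in>Dom d n. 1 \<le> l1dist d q p)}"

definition Nodes :: "nat \<Rightarrow> nat \<Rightarrow> pt set" where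
  "Nodes d n = Dom d n \<union> Bdry d n"

definition is_edge :: "nat \<Rightarrow> nat \<Rightarrow> pt \<Rightarrow> pt \<Rightarrow> bool" where
  "is_edge d n p q \<longleftrightarrow> p \<in> Nodes d n \<and> q \<in> Nodes d n \<and> l1dist d p q = 1
      \<and> \<not> (p \<in> Bdry d n \<and> q \<in> Bdry d n)"

definition Nbr :: "nat \<Rightarrow> nat \<Rightarrow> pt \<Rightarrow> pt set" where
  "Nbr d n p = {q. is_edge d n p q}"

definition conductivity :: "nat \<Rightarrow> nat \<Rightarrow> (pt \<Rightarrow> pt \<Rightarrow> real) \<Rightarrow> bool" where
  "conductivity d n \<gamma> \<longleftrightarrow> (\<forall>p q. is_edge d n p q \<longrightarrow> \<gamma> p q > 0 \<and> \<gamma> p q = \<gamma> q p)"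

text \<open>Functions on subsets of the node set are extended by zero.\<close>
definition restr :: "pt set \<Rightarrow> (pt \<Rightarrow> real) \<Rightarrow> pt \<Rightarrow> real" where
  "restr A u = (\<lambda>p. if p \<in> A then u p else 0)"

definition Sgam :: "nat \<Rightarrow> nat \<Rightarrow> (pt \<Rightarrow> pt \<Rightarrow> real) \<Rightarrow> (pt \<Rightarrow> real) \<Rightarrow> pt \<Rightarrow> real" where
  "Sgam d n \<gamma> \<phi> = (THE u. (\<forall>p\<in>Dom d n. (\<Sum>q\<in>Nbr d n p. \<gamma> p q * (u q - u p)) = 0)
       \<and> (\<forall>p\<in>Bdry d n. u p = \<phi> p) \<and> (\<forall>p. p \<notin> Nodes d n \<longrightarrow> u p = 0))"

definition ssum :: "nat \<Rightarrow> pt \<Rightarrow> int" where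
  "ssum d x = (\<Sum>i<d. x i)"

definition Lt :: "nat \<Rightarrow> nat \<Rightarrow> int \<Rightarrow> pt set" where
  "Lt d n t = {x\<in>Dom d n. ssum d x = t}"

definition LSt :: "nat \<Rightarrow> nat \<Rightarrow> int \<Rightarrow> pt set" where
  "LSt d n t = {x\<in>Dom d n. ssum d x \<le> t}"

definition Kplus :: "nat \<Rightarrow> nat \<Rightarrow> int \<Rightarrow> pt set" where
  "Kplus d n t = {x\<in>Bdry d n. ssum d x = t \<and> Max (x ` {..<d}) = int n + 1}"

definition Kminus :: "nat \<Rightarrow> nat \<Rightarrow> int \<Rightarrow> pt set" where
  "Kminus d n t = {x\<in>Bdry d n. ssum d x = t \<and> Min (x ` {..<d}) = 0}"

definition KSplus :: "nat \<Rightarrow> nat \<Rightarrow> int \<Rightarrow> pt set" where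
  "KSplus d n t = (\<Union>l\<in>{..t}. Kplus d n l)"

definition KSminus :: "nat \<Rightarrow> nat \<Rightarrow> int \<Rightarrow> pt set" where
  "KSminus d n t = (\<Union>l\<in>{..t}. Kminus d n l)"

definition JSt :: "nat \<Rightarrow> nat \<Rightarrow> int \<Rightarrow> pt set" where
  "JSt d n t = KSminus d n t \<union> KSplus d n (t + 1)"

text \<open>Kernel of T_1^{(t)}: phi in R^{J_t^S} (extended by zero) with
  (S_gamma phi) restricted to L_{t+1} equal to 0.\<close>
definition kerT1 :: "nat \<Rightarrow> nat \<Rightarrow> (pt \<Rightarrow> pt \<Rightarrow> real) \<Rightarrow> int \<Rightarrow> (pt \<Rightarrow> real) set" where
  "kerT1 d n \<gamma> t = {\<phi>. (\<forall>p. p \<notin> JSt d n t \<longrightarrow> \<phi> p = 0)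
       \<and> (\<forall>p\<in>Lt d n (t + 1). Sgam d n \<gamma> \<phi> p = 0)}"

definition Ut :: "nat \<Rightarrow> nat \<Rightarrow> (pt \<Rightarrow> pt \<Rightarrow> real) \<Rightarrow> int \<Rightarrow> (pt \<Rightarrow> real) set" where
  "Ut d n \<gamma> t = (\<lambda>\<phi>. restr (JSt d n t \<union> LSt d n t) (Sgam d n \<gamma> \<phi>)) ` kerT1 d n \<gamma> t"

definition vvec :: "nat \<Rightarrow> nat \<Rightarrow> (pt \<Rightarrow> pt \<Rightarrow> real) \<Rightarrow> pt \<Rightarrow> pt \<Rightarrow> real" where
  "vvec d n \<gamma> p = (\<lambda>q. if q \<in> Nbr d n p then \<gamma> p q
      else if q = p then - (\<Sum>r\<in>Nbr d n p. \<gamma> p r) else 0)"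

definition fspan :: "'i set \<Rightarrow> ('i \<Rightarrow> pt \<Rightarrow> real) \<Rightarrow> (pt \<Rightarrow> real) set" where
  "fspan I f = {w. \<exists>c. w = (\<lambda>q. \<Sum>i\<in>I. c i * f i q)}"

definition ip :: "pt set \<Rightarrow> (pt \<Rightarrow> real) \<Rightarrow> (pt \<Rightarrow> real) \<Rightarrow> real" where
  "ip A u w = (\<Sum>q\<in>A. u q * w q)"

end

theory Submission
  imports Defs
begin

lemma finite_box: "finite {x::pt. (\<forall>i<d. a \<le> x i \<and> x i \<le> b) \<and> (\<forall>i\<ge>d. x i = 0)}"
proof -
  have "{x::pt. (\<forall>i<d. a \<le> x i \<and> x i \<le> b) \<and> (\<forall>i\<ge>d. x i = 0)}
     \<subseteq> (\<lambda>f i. if i < d then f i else 0) ` (PiE {..<d} (\<lambda>_. {a..b}))"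
  proof
    fix x :: pt assume x: "x \<in> {x::pt. (\<forall>i<d. a \<le> x i \<and> x i \<le> b) \<and> (\<forall>i\<ge>d. x i = 0)}"
    have "restrict x {..<d} \<in> PiE {..<d} (\<lambda>_. {a..b})" using x by auto
    moreover have "x = (\<lambda>i. if i < d then restrict x {..<d} i else 0)"
      using x by (auto simp: fun_eq_iff)
    ultimately show "x \<in> (\<lambda>f i. if i < d then f i else 0) ` (PiE {..<d} (\<lambda>_. {a..b}))" by blast
  qed
  moreover have "finite (PiE {..<d} (\<lambda>_. {a..b::int}))" by (rule finite_PiE) auto
  ultimately show ?thesis by (meson finite_surj)
qed

lemma l1dist_sym: "l1dist d p q = l1dist d q p"
  unfolding l1dist_def by (simp add: abs_minus_commute)

lemma l1dist_self: "l1dist d p p = 0"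
  unfolding l1dist_def by simp

lemma l1_one:
  assumes "l1dist d p q = 1"
  shows "\<exists>i<d. \<bar>q i - p i\<bar> = 1 \<and> (\<forall>j<d. j \<noteq> i \<longrightarrow> q j = p j)"
proof -
  have "\<exists>i<d. p i \<noteq> q i"
  proof (rule ccontr)
    assume "\<not> ?thesis"
    then have "l1dist d p q = 0" unfolding l1dist_def by simp
    with assms show False by simp
  qed
  then obtain i where i: "i < d" "p i \<noteq> q i" by blast
  have split: "l1dist d p q = \<bar>p i - q i\<bar> + (\<Sum>j\<in>{..<d}-{i}. \<bar>p j - q j\<bar>)"
    unfolding l1dist_def using i by (simp add: sum.remove)
  have nn: "(\<Sum>j\<in>{..<d}-{i}. \<bar>p j - q j\<bar>) \<ge> 0" by (simp add: sum_nonneg)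
  have "\<bar>p i - q i\<bar> \<ge> 1" using i by auto
  then have e1: "\<bar>p i - q i\<bar> = 1" and e0: "(\<Sum>j\<in>{..<d}-{i}. \<bar>p j - q j\<bar>) = 0"
    using split nn assms by linarith+
  from e0 have "\<forall>j\<in>{..<d}-{i}. \<bar>p j - q j\<bar> = 0"
    by (subst (asm) sum_nonneg_eq_0_iff) auto
  then show ?thesis using i e1 by (intro exI[of _ i]) (auto simp: abs_minus_commute)
qed

lemma ssum_diff:
  assumes "i < d" "\<forall>j<d. j \<noteq> i \<longrightarrow> q j = p j"
  shows "ssum d q = ssum d p + (q i - p i)"
proof -
  have "ssum d q - ssum d p = (\<Sum>j<d. q j - p j)" unfolding ssum_def by (simp add: sum_subtractf)
  also have "\<dots> = (\<Sum>j<d. if j = i then q i - p i else 0)"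
    using assms by (intro sum.cong) auto
  also have "\<dots> = q i - p i" using assms by simp
  finally show ?thesis by simp
qed

lemma ssum_adj:
  assumes "l1dist d p q = 1"
  shows "ssum d q = ssum d p + 1 \<or> ssum d q = ssum d p - 1"
proof -
  obtain i where i: "i < d" "\<bar>q i - p i\<bar> = 1" "\<forall>j<d. j \<noteq> i \<longrightarrow> q j = p j"
    using l1_one[OF assms] by blast
  then show ?thesis using ssum_diff[OF i(1) i(3)] by (auto simp: abs_if split: if_splits)
qed

lemma Dom_Bdry_disj: "Dom d n \<inter> Bdry d n = {}"
  unfolding Bdry_def using l1dist_self by fastforce

lemma Bdry_box: "Bdry d n \<subseteq> {x::pt. (\<forall>i<d. 0 \<le> x i \<and> x i \<le> int n + 1) \<and> (\<forall>i\<ge>d. x i = 0)}"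
proof
  fix p assume p: "p \<in> Bdry d n"
  then obtain q where q: "q \<in> Dom d n" "l1dist d q p = 1" unfolding Bdry_def by auto
  have "\<forall>i<d. \<bar>q i - p i\<bar> \<le> 1"
  proof (intro allI impI)
    fix i assume "i < d"
    then have "\<bar>q i - p i\<bar> \<le> l1dist d q p" unfolding l1dist_def
      by (intro member_le_sum) auto
    then show "\<bar>q i - p i\<bar> \<le> 1" using q by simp
  qed
  then show "p \<in> {x::pt. (\<forall>i<d. 0 \<le> x i \<and> x i \<le> int n + 1) \<and> (\<forall>i\<ge>d. x i = 0)}"
    using p q(1) unfolding Bdry_def Dom_def by (force simp: abs_le_iff)
qed

lemma finite_Dom: "finite (Dom d n)"
  unfolding Dom_def by (rule finite_subset[OF _ finite_box[of d 1 "int n"]]) auto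

lemma finite_Bdry: "finite (Bdry d n)"
  by (rule finite_subset[OF Bdry_box finite_box])

lemma finite_Nodes: "finite (Nodes d n)"
  unfolding Nodes_def using finite_Dom finite_Bdry by simp

lemma Nbr_Nodes: "Nbr d n p \<subseteq> Nodes d n"
  unfolding Nbr_def is_edge_def by auto

lemma finite_Nbr: "finite (Nbr d n p)"
  using finite_subset[OF Nbr_Nodes finite_Nodes] .

lemma Nbr_l1: "q \<in> Nbr d n p \<Longrightarrow> l1dist d p q = 1"
  unfolding Nbr_def is_edge_def by auto

lemma Nbr_not_self: "p \<notin> Nbr d n p"
  using Nbr_l1 l1dist_self by fastforce

lemma Nbr_sym: "q \<in> Nbr d n p \<longleftrightarrow> p \<in> Nbr d n q"
  unfolding Nbr_def is_edge_def using l1dist_sym[of d p q] by auto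

lemma Nbr_ssum: "q \<in> Nbr d n p \<Longrightarrow> ssum d q = ssum d p + 1 \<or> ssum d q = ssum d p - 1"
  using Nbr_l1 ssum_adj by blast

lemma down_Nbr:
  assumes "d \<ge> 1" "x \<in> Dom d n"
  shows "x(0 := x 0 - 1) \<in> Nbr d n x" "ssum d (x(0 := x 0 - 1)) = ssum d x - 1"
proof -
  let ?y = "x(0 := x 0 - 1)"
  have l1: "l1dist d x ?y = 1"
  proof -
    have "l1dist d x ?y = (\<Sum>j<d. if j = 0 then 1 else 0)"
      unfolding l1dist_def by (intro sum.cong) auto
    then show ?thesis using assms by simp
  qed
  have "?y \<in> Nodes d n"
  proof (cases "x 0 \<ge> 2")
    case True
    then have "?y \<in> Dom d n" using assms unfolding Dom_def by auto
    then show ?thesis unfolding Nodes_def by auto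
  next
    case False
    then have x0: "x 0 = 1" using assms unfolding Dom_def by force
    have "?y \<in> Bdry d n" unfolding Bdry_def
    proof (intro CollectI conjI)
      show "\<forall>i\<ge>d. ?y i = 0" using assms unfolding Dom_def by auto
      show "\<exists>q\<in>Dom d n. l1dist d q ?y = 1" using assms(2) l1 by blast
      show "\<forall>q\<in>Dom d n. 1 \<le> l1dist d q ?y"
      proof
        fix q assume q: "q \<in> Dom d n"
        have "\<bar>q 0 - ?y 0\<bar> \<le> l1dist d q ?y" unfolding l1dist_def
          using assms by (intro member_le_sum) auto
        moreover have "\<bar>q 0 - ?y 0\<bar> \<ge> 1" using q x0 assms unfolding Dom_def by auto
        ultimately show "1 \<le> l1dist d q ?y" by simp
      qed
    qed
    then show ?thesis unfolding Nodes_def by auto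
  qed
  moreover have "x \<notin> Bdry d n" using assms Dom_Bdry_disj by blast
  ultimately show "?y \<in> Nbr d n x" using assms l1 unfolding Nbr_def is_edge_def Nodes_def by auto
  show "ssum d ?y = ssum d x - 1"
    using ssum_diff[of 0 d ?y x] assms by auto
qed

lemma ip_lin: "ip A (\<lambda>q. a q - x * b q) w = ip A a w - x * ip A b w"
  unfolding ip_def by (simp add: algebra_simps sum_subtractf sum_distrib_left)

lemma ip_comm: "ip A a b = ip A b a"
  unfolding ip_def by (simp add: mult.commute)

lemma ip_self_zero:
  assumes "finite A" "ip A a a = 0"
  shows "\<forall>q\<in>A. a q = 0"
proof -
  have "\<forall>q\<in>A. a q * a q = 0"
    using assms unfolding ip_def by (subst (asm) sum_nonneg_eq_0_iff) auto
  then show ?thesis by simp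
qed

lemma proj_step:
  assumes "finite A" "finite I"
  shows "\<forall>f. \<exists>c. \<forall>j\<in>I. ip A (\<lambda>q. f q - (\<Sum>i\<in>I. c i * v i q)) (v j) = 0"
  using assms(2)
proof (induction I rule: finite_induct)
  case empty
  then show ?case by simp
next
  case (insert k I)
  show ?case
  proof
    fix f
    obtain c1 where c1: "\<forall>j\<in>I. ip A (\<lambda>q. f q - (\<Sum>i\<in>I. c1 i * v i q)) (v j) = 0"
      using insert.IH by blast
    obtain c2 where c2: "\<forall>j\<in>I. ip A (\<lambda>q. v k q - (\<Sum>i\<in>I. c2 i * v i q)) (v j) = 0"
      using insert.IH by blast
    define r1 where "r1 = (\<lambda>q. f q - (\<Sum>i\<in>I. c1 i * v i q))"
    define r2 where "r2 = (\<lambda>q. v k q - (\<Sum>i\<in>I. c2 i * v i q))"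
    have o1: "\<forall>j\<in>I. ip A r1 (v j) = 0" using c1 r1_def by simp
    have o2: "\<forall>j\<in>I. ip A r2 (v j) = 0" using c2 r2_def by simp
    have key: "ip A g (v k) = ip A g r2 + (\<Sum>i\<in>I. c2 i * ip A g (v i))" for g
    proof -
      have "ip A g (v k) = (\<Sum>q\<in>A. g q * r2 q + (\<Sum>i\<in>I. c2 i * (g q * v i q)))"
        unfolding ip_def r2_def by (intro sum.cong) (auto simp: algebra_simps sum_distrib_left)
      also have "\<dots> = ip A g r2 + (\<Sum>i\<in>I. c2 i * ip A g (v i))"
        unfolding ip_def by (simp add: sum.distrib sum_distrib_left sum.swap[of _ A I])
      finally show ?thesis .
    qed
    show "\<exists>c. \<forall>j\<in>insert k I. ip A (\<lambda>q. f q - (\<Sum>i\<in>insert k I. c i * v i q)) (v j) = 0"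
    proof (cases "ip A r2 r2 = 0")
      case True
      then have z: "\<forall>q\<in>A. r2 q = 0" using ip_self_zero assms(1) by blast
      have "ip A r1 r2 = 0" unfolding ip_def using z by simp
      define c where "c = c1(k := 0)"
      have eq: "(\<lambda>q. f q - (\<Sum>i\<in>insert k I. c i * v i q)) = r1"
      proof
        fix q
        have "(\<Sum>i\<in>I. (if i = k then 0 else c1 i) * v i q) = (\<Sum>i\<in>I. c1 i * v i q)"
          using insert.hyps by (intro sum.cong) auto
        then show "f q - (\<Sum>i\<in>insert k I. c i * v i q) = r1 q"
          unfolding r1_def c_def using insert.hyps by simp
      qed
      have "ip A r1 (v k) = 0" using key[of r1] o1 \<open>ip A r1 r2 = 0\<close> by simp
      then show ?thesis using o1 eq by (intro exI[of _ c]) auto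
    next
      case False
      define \<alpha> where "\<alpha> = ip A r1 r2 / ip A r2 r2"
      define c where "c = (\<lambda>i. if i = k then \<alpha> else c1 i - \<alpha> * c2 i)"
      have eq: "(\<lambda>q. f q - (\<Sum>i\<in>insert k I. c i * v i q)) = (\<lambda>q. r1 q - \<alpha> * r2 q)"
      proof
        fix q
        have "(\<Sum>i\<in>insert k I. c i * v i q) = \<alpha> * v k q + (\<Sum>i\<in>I. (c1 i - \<alpha> * c2 i) * v i q)"
          unfolding c_def using insert.hyps by (auto intro!: sum.cong)
        also have "\<dots> = \<alpha> * v k q + (\<Sum>i\<in>I. c1 i * v i q) - \<alpha> * (\<Sum>i\<in>I. c2 i * v i q)"
          by (simp add: algebra_simps sum_subtractf sum_distrib_left)
        finally show "f q - (\<Sum>i\<in>insert k I. c i * v i q) = r1 q - \<alpha> * r2 q"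
          unfolding r1_def r2_def by (simp add: algebra_simps)
      qed
      have oI: "\<forall>j\<in>I. ip A (\<lambda>q. r1 q - \<alpha> * r2 q) (v j) = 0"
        using o1 o2 by (simp add: ip_lin)
      have "ip A (\<lambda>q. r1 q - \<alpha> * r2 q) r2 = 0"
        using False unfolding ip_lin \<alpha>_def by simp
      then have "ip A (\<lambda>q. r1 q - \<alpha> * r2 q) (v k) = 0"
        using key[of "\<lambda>q. r1 q - \<alpha> * r2 q"] oI by simp
      then show ?thesis using oI eq by (intro exI[of _ c]) auto
    qed
  qed
qed

lemma harm_vvec:
  assumes "p \<in> Nodes d n"
  shows "(\<Sum>q\<in>Nbr d n p. \<gamma> p q * (u q - u p)) = (\<Sum>q\<in>Nodes d n. vvec d n \<gamma> p q * u q)"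
proof -
  have pt: "vvec d n \<gamma> p q * u q = (if q \<in> Nbr d n p then \<gamma> p q * u q else 0)
      + (if q = p then - (\<Sum>r\<in>Nbr d n p. \<gamma> p r) * u p else 0)" for q
    unfolding vvec_def using Nbr_not_self[of p d n] by auto
  have "(\<Sum>q\<in>Nodes d n. vvec d n \<gamma> p q * u q)
      = (\<Sum>q\<in>Nodes d n. if q \<in> Nbr d n p then \<gamma> p q * u q else 0)
        + (\<Sum>q\<in>Nodes d n. if q = p then - (\<Sum>r\<in>Nbr d n p. \<gamma> p r) * u p else 0)"
    unfolding pt by (simp add: sum.distrib)
  also have "\<dots> = (\<Sum>q\<in>Nbr d n p. \<gamma> p q * u q) - (\<Sum>r\<in>Nbr d n p. \<gamma> p r) * u p"
    using assms Nbr_Nodes[of d n p] finite_Nodes[of d n]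
    by (simp add: sum.inter_restrict[symmetric] Int_absorb1)
  also have "\<dots> = (\<Sum>q\<in>Nbr d n p. \<gamma> p q * (u q - u p))"
    by (simp add: right_diff_distrib sum_subtractf sum_distrib_left mult.commute)
  finally show ?thesis by simp
qed

lemma maxp:
  assumes d1: "d \<ge> 1" and cond: "conductivity d n \<gamma>" and R: "R \<subseteq> Dom d n"
    and harm: "\<forall>p\<in>R. (\<Sum>q\<in>Nbr d n p. \<gamma> p q * (u q - u p)) = 0"
    and out: "\<forall>p\<in>R. \<forall>q\<in>Nbr d n p. q \<notin> R \<longrightarrow> u q = 0"
  shows "\<forall>p\<in>R. u p \<le> 0"
proof (rule ccontr)
  assume "\<not> ?thesis"
  then obtain p0 where p0: "p0 \<in> R" "u p0 > 0" by force
  have fR: "finite R" using R finite_Dom finite_subset by blast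
  define M where "M = Max (u ` R)"
  have M0: "M \<ge> u p0" unfolding M_def using fR p0 by simp
  have Mge: "\<forall>p\<in>R. u p \<le> M" unfolding M_def using fR by simp
  define S where "S = {p\<in>R. u p = M}"
  have "M \<in> u ` R" unfolding M_def using fR p0 by (intro Max_in) auto
  then have Sne: "S \<noteq> {}" unfolding S_def by auto
  have fS: "finite S" unfolding S_def using fR by simp
  define m where "m = Min (ssum d ` S)"
  have "m \<in> ssum d ` S" unfolding m_def using fS Sne by (intro Min_in) auto
  then obtain x where x: "x \<in> S" "ssum d x = m" by auto
  have mle: "\<forall>y\<in>S. m \<le> ssum d y" unfolding m_def using fS by simp
  have xR: "x \<in> R" and ux: "u x = M" using x unfolding S_def by auto
  have Mpos: "M > 0" using M0 p0 by simp
  have le: "\<forall>q\<in>Nbr d n x. u q \<le> M"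
    using Mge out xR Mpos by (metis less_imp_le)
  have h0: "(\<Sum>q\<in>Nbr d n x. \<gamma> x q * (u q - u x)) = 0" using harm xR by blast
  have "(\<Sum>q\<in>Nbr d n x. \<gamma> x q * (M - u q)) = - (\<Sum>q\<in>Nbr d n x. \<gamma> x q * (u q - u x))"
    unfolding sum_negf[symmetric] by (intro sum.cong) (auto simp: ux algebra_simps)
  then have "(\<Sum>q\<in>Nbr d n x. \<gamma> x q * (M - u q)) = 0" using h0 by simp
  moreover have "\<forall>q\<in>Nbr d n x. \<gamma> x q * (M - u q) \<ge> 0"
  proof
    fix q assume q: "q \<in> Nbr d n x"
    have "\<gamma> x q > 0" using cond q unfolding conductivity_def Nbr_def by blast
    moreover have "u q \<le> M" using le q by auto
    ultimately show "\<gamma> x q * (M - u q) \<ge> 0" by simp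
  qed
  ultimately have "\<forall>q\<in>Nbr d n x. \<gamma> x q * (M - u q) = 0"
    using finite_Nbr by (subst (asm) sum_nonneg_eq_0_iff) auto
  moreover have "\<forall>q\<in>Nbr d n x. \<gamma> x q > 0"
    using cond unfolding conductivity_def Nbr_def by blast
  ultimately have allM: "\<forall>q\<in>Nbr d n x. u q = M" by (metis eq_iff_diff_eq_0 less_irrefl mult_zero_left no_zero_divisors)
  define y where "y = x(0 := x 0 - 1)"
  have xD: "x \<in> Dom d n" using xR R by auto
  have yN: "y \<in> Nbr d n x" and ys: "ssum d y = ssum d x - 1"
    using down_Nbr[OF d1 xD] y_def by auto
  have uy: "u y = M" using allM yN by auto
  then have "y \<in> R" using out xR yN Mpos by force
  then have "y \<in> S" using uy S_def by auto
  then show False using mle ys x by force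
qed

lemma harm_zero:
  assumes d1: "d \<ge> 1" and cond: "conductivity d n \<gamma>"
    and harm: "\<forall>p\<in>Dom d n. (\<Sum>q\<in>Nbr d n p. \<gamma> p q * (u q - u p)) = 0"
    and bd: "\<forall>p\<in>Bdry d n. u p = 0"
  shows "\<forall>p\<in>Dom d n. u p = 0"
proof -
  have out: "\<forall>p\<in>Dom d n. \<forall>q\<in>Nbr d n p. q \<notin> Dom d n \<longrightarrow> u q = 0"
    using bd Nbr_Nodes unfolding Nodes_def by blast
  have a: "\<forall>p\<in>Dom d n. u p \<le> 0" by (rule maxp[OF d1 cond order_refl harm out])
  have harm': "\<forall>p\<in>Dom d n. (\<Sum>q\<in>Nbr d n p. \<gamma> p q * ((- u) q - (- u) p)) = 0"
  proof
    fix p assume "p \<in> Dom d n"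
    then have "(\<Sum>q\<in>Nbr d n p. \<gamma> p q * (u q - u p)) = 0" using harm by blast
    then have "- (\<Sum>q\<in>Nbr d n p. \<gamma> p q * (u q - u p)) = 0" by simp
    then show "(\<Sum>q\<in>Nbr d n p. \<gamma> p q * ((- u) q - (- u) p)) = 0"
      by (simp add: sum_negf[symmetric] algebra_simps)
  qed
  have out': "\<forall>p\<in>Dom d n. \<forall>q\<in>Nbr d n p. q \<notin> Dom d n \<longrightarrow> (- u) q = 0"
    using out by simp
  have b: "\<forall>p\<in>Dom d n. (- u) p \<le> 0" by (rule maxp[OF d1 cond order_refl harm' out'])
  show ?thesis using a b by force
qed

definition dirich :: "nat \<Rightarrow> nat \<Rightarrow> (pt \<Rightarrow> pt \<Rightarrow> real) \<Rightarrow> (pt \<Rightarrow> real) \<Rightarrow> (pt \<Rightarrow> real) \<Rightarrow> bool" where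
  "dirich d n \<gamma> \<phi> u \<longleftrightarrow> (\<forall>p\<in>Dom d n. (\<Sum>q\<in>Nbr d n p. \<gamma> p q * (u q - u p)) = 0)
       \<and> (\<forall>p\<in>Bdry d n. u p = \<phi> p) \<and> (\<forall>p. p \<notin> Nodes d n \<longrightarrow> u p = 0)"

lemma Sgam_eq: "Sgam d n \<gamma> \<phi> = (THE u. dirich d n \<gamma> \<phi> u)"
  unfolding Sgam_def dirich_def ..

lemma dirich_unique:
  assumes d1: "d \<ge> 1" and cond: "conductivity d n \<gamma>"
    and u: "dirich d n \<gamma> \<phi> u" and v: "dirich d n \<gamma> \<phi> v"
  shows "u = v"
proof -
  define w where "w = (\<lambda>q. u q - v q)"
  have harm: "\<forall>p\<in>Dom d n. (\<Sum>q\<in>Nbr d n p. \<gamma> p q * (w q - w p)) = 0"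
  proof
    fix p assume p: "p \<in> Dom d n"
    have "(\<Sum>q\<in>Nbr d n p. \<gamma> p q * (w q - w p)) =
       (\<Sum>q\<in>Nbr d n p. \<gamma> p q * (u q - u p)) - (\<Sum>q\<in>Nbr d n p. \<gamma> p q * (v q - v p))"
      unfolding w_def by (simp add: sum_subtractf[symmetric] algebra_simps)
    then show "(\<Sum>q\<in>Nbr d n p. \<gamma> p q * (w q - w p)) = 0"
      using u v p unfolding dirich_def by simp
  qed
  have "\<forall>p\<in>Bdry d n. w p = 0" using u v unfolding dirich_def w_def by simp
  then have "\<forall>p\<in>Dom d n. w p = 0" using harm_zero[OF d1 cond harm] by blast
  moreover have "\<forall>p. p \<notin> Nodes d n \<longrightarrow> w p = 0" using u v unfolding dirich_def w_def by simp
  moreover have "\<forall>p\<in>Bdry d n. w p = 0" using u v unfolding dirich_def w_def by simp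
  ultimately have "\<forall>p. w p = 0" unfolding Nodes_def by blast
  then show ?thesis unfolding w_def by (auto simp: fun_eq_iff)
qed

lemma vvec_sym:
  assumes cond: "conductivity d n \<gamma>"
  shows "vvec d n \<gamma> p q = vvec d n \<gamma> q p"
proof -
  have "q \<in> Nbr d n p \<Longrightarrow> \<gamma> p q = \<gamma> q p"
    using cond unfolding conductivity_def Nbr_def by auto
  then show ?thesis unfolding vvec_def using Nbr_sym[of q d n p] by auto
qed

lemma vvec_supp:
  assumes "q \<notin> Nodes d n" "p \<in> Nodes d n"
  shows "vvec d n \<gamma> p q = 0"
  using assms Nbr_Nodes unfolding vvec_def by auto

lemma dirich_exists:
  assumes d1: "d \<ge> 1" and cond: "conductivity d n \<gamma>"
  shows "\<exists>u. dirich d n \<gamma> \<phi> u"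
proof -
  let ?D = "Dom d n" and ?N = "Nodes d n" and ?v = "vvec d n \<gamma>"
  define \<phi>0 where "\<phi>0 = restr (Bdry d n) \<phi>"
  define b where "b = (\<lambda>q. - (\<Sum>r\<in>?N. ?v q r * \<phi>0 r))"
  obtain c where c: "\<forall>j\<in>?D. ip ?D (\<lambda>q. b q - (\<Sum>i\<in>?D. c i * restr ?D (?v i) q)) (restr ?D (?v j)) = 0"
    using proj_step[OF finite_Dom finite_Dom, where v="\<lambda>i. restr ?D (?v i)"] by blast
  define r where "r = (\<lambda>q. b q - (\<Sum>i\<in>?D. c i * restr ?D (?v i) q))"
  define \<rho> where "\<rho> = restr ?D r"
  have harm\<rho>: "\<forall>p\<in>?D. (\<Sum>q\<in>Nbr d n p. \<gamma> p q * (\<rho> q - \<rho> p)) = 0"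
  proof
    fix p assume p: "p \<in> ?D"
    then have pN: "p \<in> ?N" unfolding Nodes_def by auto
    have "(\<Sum>q\<in>Nbr d n p. \<gamma> p q * (\<rho> q - \<rho> p)) = (\<Sum>q\<in>?N. ?v p q * \<rho> q)"
      by (rule harm_vvec[OF pN])
    also have "\<dots> = (\<Sum>q\<in>?D. ?v p q * r q)"
      unfolding \<rho>_def restr_def using finite_Nodes[of d n]
      by (simp add: sum.inter_restrict[symmetric] Int_absorb1 Nodes_def if_distrib cong: if_cong)
    also have "\<dots> = ip ?D r (restr ?D (?v p))"
      unfolding ip_def restr_def using vvec_sym[OF cond] by (intro sum.cong) auto
    also have "\<dots> = 0" using c p unfolding r_def by blast
    finally show "(\<Sum>q\<in>Nbr d n p. \<gamma> p q * (\<rho> q - \<rho> p)) = 0" .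
  qed
  have "\<forall>p\<in>Bdry d n. \<rho> p = 0" unfolding \<rho>_def restr_def using Dom_Bdry_disj by auto
  then have r0: "\<forall>p\<in>?D. r p = 0" using harm_zero[OF d1 cond harm\<rho>] unfolding \<rho>_def restr_def by auto
  define w where "w = restr ?D c"
  define u where "u = (\<lambda>q. \<phi>0 q + w q)"
  have "dirich d n \<gamma> \<phi> u" unfolding dirich_def
  proof (intro conjI ballI allI impI)
    fix p assume p: "p \<in> ?D"
    then have pN: "p \<in> ?N" unfolding Nodes_def by auto
    have "(\<Sum>q\<in>?N. ?v p q * w q) = (\<Sum>q\<in>?D. ?v p q * c q)"
      unfolding w_def restr_def using finite_Nodes[of d n]
      by (simp add: sum.inter_restrict[symmetric] Int_absorb1 Nodes_def if_distrib cong: if_cong)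
    also have "\<dots> = (\<Sum>i\<in>?D. c i * restr ?D (?v i) p)"
      unfolding restr_def using p vvec_sym[OF cond] by (intro sum.cong) auto
    also have "\<dots> = b p" using r0 p unfolding r_def by auto
    finally have e: "(\<Sum>q\<in>?N. ?v p q * w q) = b p" .
    have "(\<Sum>q\<in>Nbr d n p. \<gamma> p q * (u q - u p)) = (\<Sum>q\<in>?N. ?v p q * u q)"
      by (rule harm_vvec[OF pN])
    also have "\<dots> = (\<Sum>q\<in>?N. ?v p q * \<phi>0 q) + (\<Sum>q\<in>?N. ?v p q * w q)"
      unfolding u_def by (simp add: algebra_simps sum.distrib)
    also have "\<dots> = 0" using e unfolding b_def by simp
    finally show "(\<Sum>q\<in>Nbr d n p. \<gamma> p q * (u q - u p)) = 0" .
  next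
    fix p assume "p \<in> Bdry d n"
    then show "u p = \<phi> p" unfolding u_def \<phi>0_def w_def restr_def using Dom_Bdry_disj by auto
  next
    fix p assume "p \<notin> ?N"
    then show "u p = 0" unfolding u_def \<phi>0_def w_def restr_def Nodes_def by auto
  qed
  then show ?thesis by blast
qed

lemma Sgam_dirich:
  assumes d1: "d \<ge> 1" and cond: "conductivity d n \<gamma>"
  shows "dirich d n \<gamma> \<phi> (Sgam d n \<gamma> \<phi>)"
proof -
  obtain u where u: "dirich d n \<gamma> \<phi> u" using dirich_exists[OF d1 cond] by blast
  have "dirich d n \<gamma> \<phi> (THE u. dirich d n \<gamma> \<phi> u)"
    by (rule theI[of _ u]) (use u dirich_unique[OF d1 cond] in blast)+
  then show ?thesis unfolding Sgam_eq .
qed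

lemma Sgam_unique:
  assumes d1: "d \<ge> 1" and cond: "conductivity d n \<gamma>" and u: "dirich d n \<gamma> \<phi> u"
  shows "Sgam d n \<gamma> \<phi> = u"
  using dirich_unique[OF d1 cond Sgam_dirich[OF d1 cond] u] .

lemma maxp_zero:
  assumes d1: "d \<ge> 1" and cond: "conductivity d n \<gamma>" and R: "R \<subseteq> Dom d n"
    and harm: "\<forall>p\<in>R. (\<Sum>q\<in>Nbr d n p. \<gamma> p q * (u q - u p)) = 0"
    and out: "\<forall>p\<in>R. \<forall>q\<in>Nbr d n p. q \<notin> R \<longrightarrow> u q = 0"
  shows "\<forall>p\<in>R. u p = 0"
proof -
  have a: "\<forall>p\<in>R. u p \<le> 0" by (rule maxp[OF d1 cond R harm out])
  have harm': "\<forall>p\<in>R. (\<Sum>q\<in>Nbr d n p. \<gamma> p q * ((- u) q - (- u) p)) = 0"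
  proof
    fix p assume "p \<in> R"
    then have "(\<Sum>q\<in>Nbr d n p. \<gamma> p q * (u q - u p)) = 0" using harm by blast
    then have "- (\<Sum>q\<in>Nbr d n p. \<gamma> p q * (u q - u p)) = 0" by simp
    then show "(\<Sum>q\<in>Nbr d n p. \<gamma> p q * ((- u) q - (- u) p)) = 0"
      by (simp add: sum_negf[symmetric] algebra_simps)
  qed
  have out': "\<forall>p\<in>R. \<forall>q\<in>Nbr d n p. q \<notin> R \<longrightarrow> (- u) q = 0"
    using out by simp
  have b: "\<forall>p\<in>R. (- u) p \<le> 0" by (rule maxp[OF d1 cond R harm' out'])
  show ?thesis using a b by force
qed

lemma Kplus_adj:
  assumes d1: "d \<ge> 1" and q: "q \<in> Kplus d n l" and p: "p \<in> Dom d n" and l1: "l1dist d p q = 1"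
  shows "ssum d p = l - 1"
proof -
  have ne: "0 \<in> {..<d}" using d1 by simp
  have "Max (q ` {..<d}) \<in> q ` {..<d}" using ne by (intro Max_in) auto
  then obtain j where j: "j < d" "q j = int n + 1" using q unfolding Kplus_def by auto
  obtain i where i: "i < d" "\<bar>q i - p i\<bar> = 1" "\<forall>k<d. k \<noteq> i \<longrightarrow> q k = p k"
    using l1_one[OF l1] by blast
  have "p j \<le> int n" using p j unfolding Dom_def by auto
  then have "j = i" using i j by force
  then have "q i - p i = 1" using i j \<open>p j \<le> int n\<close> by auto
  then show ?thesis using ssum_diff[OF i(1) i(3)] q unfolding Kplus_def by simp
qed

lemma ip_sum_r: "ip A u (\<lambda>q. \<Sum>p\<in>I. c p * f p q) = (\<Sum>p\<in>I. c p * ip A u (f p))"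
  unfolding ip_def by (simp add: sum_distrib_left sum.swap[of _ A I] algebra_simps)

theorem lemma2p4:
  fixes d n :: nat and \<gamma> :: "pt \<Rightarrow> pt \<Rightarrow> real" and t :: int
  assumes "d \<ge> 2" and "n \<ge> 1" and "conductivity d n \<gamma>"
    and "int d - 1 \<le> t" and "t \<le> int d * int n - 1"
  defines "A \<equiv> LSt d n t \<union> JSt d n t"
  defines "W \<equiv> fspan (LSt d n (t + 1)) (\<lambda>p. restr A (vvec d n \<gamma> p))"
  shows "(\<forall>u\<in>Ut d n \<gamma> t. \<forall>w\<in>W. ip A u w = 0)
    \<and> Ut d n \<gamma> t \<inter> W = {\<lambda>_. 0}
    \<and> {(\<lambda>q. u q + w q) | u w. u \<in> Ut d n \<gamma> t \<and> w \<in> W} = {f. \<forall>p. p \<notin> A \<longrightarrow> f p = 0}"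
proof -
  have d1: "d \<ge> 1" using assms(1) by simp
  note cond = assms(3)
  have JB: "JSt d n t \<subseteq> Bdry d n"
    unfolding JSt_def KSminus_def KSplus_def Kminus_def Kplus_def by auto
  have LD: "LSt d n s \<subseteq> Dom d n" for s unfolding LSt_def by auto
  have AN: "A \<subseteq> Nodes d n" unfolding A_def Nodes_def using JB LD by blast
  have finA: "finite A" using AN finite_Nodes finite_subset by blast
  have finL: "finite (LSt d n (t+1))" using LD finite_Dom finite_subset by blast
  have AU: "JSt d n t \<union> LSt d n t = A" unfolding A_def by blast
  have NA: "q \<notin> A" if p: "p \<in> Dom d n" and q: "q \<in> Nbr d n p"
      and sp: "ssum d p \<ge> t + 1" and sq: "ssum d q \<ge> t + 1" for p q
  proof
    assume qA: "q \<in> A"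
    show False
    proof (cases "q \<in> LSt d n t \<or> q \<in> KSminus d n t")
      case True
      then show ?thesis using sq unfolding LSt_def KSminus_def Kminus_def by auto
    next
      case False
      then have "q \<in> KSplus d n (t+1)" using qA unfolding A_def JSt_def by auto
      then obtain l where l: "l \<le> t + 1" "q \<in> Kplus d n l" unfolding KSplus_def by auto
      have "ssum d p = l - 1" using Kplus_adj[OF d1 l(2) p Nbr_l1[OF q]] .
      then show False using l sp by simp
    qed
  qed
  have ADom: "p \<in> A \<longleftrightarrow> ssum d p \<le> t" if "p \<in> Dom d n" for p
    using that JB Dom_Bdry_disj unfolding A_def LSt_def by blast
  have orth: "ip A u (restr A (vvec d n \<gamma> p)) = 0" if u: "u \<in> Ut d n \<gamma> t" and p: "p \<in> LSt d n (t+1)" for u p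
  proof -
    obtain \<phi> where \<phi>: "\<phi> \<in> kerT1 d n \<gamma> t" and ueq: "u = restr A (Sgam d n \<gamma> \<phi>)"
      using u unfolding Ut_def AU by blast
    define g where "g = Sgam d n \<gamma> \<phi>"
    have dg: "dirich d n \<gamma> \<phi> g" unfolding g_def by (rule Sgam_dirich[OF d1 cond])
    have phi0: "\<phi> q = 0" if "q \<notin> JSt d n t" for q using \<phi> that unfolding kerT1_def by blast
    have gL: "g q = 0" if "q \<in> Dom d n" "ssum d q = t + 1" for q
      using \<phi> that unfolding kerT1_def Lt_def g_def by blast
    define R where "R = {x\<in>Dom d n. ssum d x \<ge> t + 2}"
    have gR: "\<forall>x\<in>R. g x = 0"
    proof (rule maxp_zero[OF d1 cond])
      show "R \<subseteq> Dom d n" unfolding R_def by auto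
      show "\<forall>x\<in>R. (\<Sum>q\<in>Nbr d n x. \<gamma> x q * (g q - g x)) = 0"
        using dg unfolding dirich_def R_def by auto
      show "\<forall>x\<in>R. \<forall>q\<in>Nbr d n x. q \<notin> R \<longrightarrow> g q = 0"
      proof (intro ballI impI)
        fix x q assume x: "x \<in> R" and q: "q \<in> Nbr d n x" and qR: "q \<notin> R"
        have xD: "x \<in> Dom d n" and sx: "ssum d x \<ge> t + 2" using x unfolding R_def by auto
        have sq: "ssum d q \<ge> t + 1" using Nbr_ssum[OF q] sx by auto
        have "q \<in> Nodes d n" using q Nbr_Nodes by blast
        then show "g q = 0"
        proof (cases "q \<in> Dom d n")
          case True
          then have "ssum d q = t + 1" using qR sq unfolding R_def by auto
          then show ?thesis using gL True by blast
        next
          case False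
          then have qB: "q \<in> Bdry d n" using \<open>q \<in> Nodes d n\<close> unfolding Nodes_def by blast
          have "q \<notin> A" using NA[OF xD q _ sq] sx by simp
          then have "\<phi> q = 0" using phi0 unfolding A_def by blast
          then show ?thesis using dg qB unfolding dirich_def by auto
        qed
      qed
    qed
    have gfar: "g q = 0" if "q \<in> Dom d n" "ssum d q \<ge> t + 1" for q
      using gR gL that unfolding R_def by force
    have pD: "p \<in> Dom d n" and sp: "ssum d p \<le> t + 1" using p unfolding LSt_def by auto
    have pN: "p \<in> Nodes d n" using pD unfolding Nodes_def by auto
    have zero_out: "g q * vvec d n \<gamma> p q = 0" if q: "q \<in> Nodes d n - A" for q
    proof (cases "q = p")
      case True
      then have "ssum d p \<ge> t + 1" using q ADom pD by auto
      then show ?thesis using gfar pD True by simp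
    next
      case False
      show ?thesis
      proof (cases "q \<in> Nbr d n p")
        case qn: True
        show ?thesis
        proof (cases "q \<in> Dom d n")
          case True
          then have "ssum d q \<ge> t + 1" using q ADom by auto
          then show ?thesis using gfar True by simp
        next
          case qD: False
          then have qB: "q \<in> Bdry d n" using q unfolding Nodes_def by blast
          have "\<phi> q = 0" using phi0 q unfolding A_def by blast
          then show ?thesis using dg qB unfolding dirich_def by auto
        qed
      next
        case False
        then show ?thesis using \<open>q \<noteq> p\<close> unfolding vvec_def by simp
      qed
    qed
    have "ip A u (restr A (vvec d n \<gamma> p)) = (\<Sum>q\<in>A. g q * vvec d n \<gamma> p q)"
      unfolding ip_def ueq restr_def g_def by (intro sum.cong) auto
    also have "\<dots> = (\<Sum>q\<in>Nodes d n. g q * vvec d n \<gamma> p q)"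
      using AN zero_out finite_Nodes by (intro sum.mono_neutral_left) auto
    also have "\<dots> = (\<Sum>q\<in>Nbr d n p. \<gamma> p q * (g q - g p))"
      using harm_vvec[OF pN, of \<gamma> g] by (simp add: mult.commute)
    also have "\<dots> = 0" using dg pD unfolding dirich_def by auto
    finally show ?thesis .
  qed
  have part1: "\<forall>u\<in>Ut d n \<gamma> t. \<forall>w\<in>W. ip A u w = 0"
  proof (intro ballI)
    fix u w assume u: "u \<in> Ut d n \<gamma> t" and w: "w \<in> W"
    then obtain c where c: "w = (\<lambda>q. \<Sum>p\<in>LSt d n (t+1). c p * restr A (vvec d n \<gamma> p) q)"
      unfolding W_def fspan_def by blast
    show "ip A u w = 0" unfolding c ip_sum_r using orth[OF u] by simp
  qed
  have Wzero: "\<forall>w\<in>W. \<forall>p. p \<notin> A \<longrightarrow> w p = 0"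
    unfolding W_def fspan_def restr_def by auto
  have Uzero: "\<forall>u\<in>Ut d n \<gamma> t. \<forall>p. p \<notin> A \<longrightarrow> u p = 0"
    unfolding Ut_def AU restr_def by auto
  have zeroU: "(\<lambda>_. 0) \<in> Ut d n \<gamma> t"
  proof -
    have dz: "dirich d n \<gamma> (\<lambda>_. 0) (\<lambda>_. 0)" unfolding dirich_def by simp
    have S0: "Sgam d n \<gamma> (\<lambda>_. 0) = (\<lambda>_. 0)" by (rule Sgam_unique[OF d1 cond dz])
    have "(\<lambda>_. 0) \<in> kerT1 d n \<gamma> t" using S0 unfolding kerT1_def by simp
    moreover have "restr (JSt d n t \<union> LSt d n t) (Sgam d n \<gamma> (\<lambda>_. 0)) = (\<lambda>_. 0)"
      unfolding S0 restr_def by simp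
    ultimately show ?thesis unfolding Ut_def by (metis image_eqI)
  qed
  have zeroW: "(\<lambda>_. 0) \<in> W" unfolding W_def fspan_def
    by (rule CollectI, rule exI[of _ "\<lambda>_. 0"]) simp
  have part2: "Ut d n \<gamma> t \<inter> W = {\<lambda>_. 0}"
  proof
    show "Ut d n \<gamma> t \<inter> W \<subseteq> {\<lambda>_. 0}"
    proof
      fix x assume x: "x \<in> Ut d n \<gamma> t \<inter> W"
      then have "ip A x x = 0" using part1 by blast
      then have "\<forall>q\<in>A. x q = 0" using ip_self_zero[OF finA] by blast
      moreover have "\<forall>p. p \<notin> A \<longrightarrow> x p = 0" using Wzero x by blast
      ultimately have "x = (\<lambda>_. 0)" by (auto simp: fun_eq_iff)
      then show "x \<in> {\<lambda>_. 0}" by simp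
    qed
    show "{\<lambda>_. 0} \<subseteq> Ut d n \<gamma> t \<inter> W" using zeroU zeroW by simp
  qed
  have part3: "{(\<lambda>q. u q + w q) | u w. u \<in> Ut d n \<gamma> t \<and> w \<in> W} = {f. \<forall>p. p \<notin> A \<longrightarrow> f p = 0}"
  proof
    show "{(\<lambda>q. u q + w q) | u w. u \<in> Ut d n \<gamma> t \<and> w \<in> W} \<subseteq> {f. \<forall>p. p \<notin> A \<longrightarrow> f p = 0}"
      using Uzero Wzero by auto
    show "{f. \<forall>p. p \<notin> A \<longrightarrow> f p = 0} \<subseteq> {(\<lambda>q. u q + w q) | u w. u \<in> Ut d n \<gamma> t \<and> w \<in> W}"
    proof
      fix f :: "pt \<Rightarrow> real" assume "f \<in> {f. \<forall>p. p \<notin> A \<longrightarrow> f p = 0}"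
      then have f0: "\<forall>p. p \<notin> A \<longrightarrow> f p = 0" by simp
      obtain c where c: "\<forall>j\<in>LSt d n (t+1). ip A (\<lambda>q. f q - (\<Sum>i\<in>LSt d n (t+1). c i * restr A (vvec d n \<gamma> i) q)) (restr A (vvec d n \<gamma> j)) = 0"
        using proj_step[OF finA finL, where v="\<lambda>i. restr A (vvec d n \<gamma> i)"] by blast
      define w where "w = (\<lambda>q. \<Sum>i\<in>LSt d n (t+1). c i * restr A (vvec d n \<gamma> i) q)"
      define r where "r = (\<lambda>q. f q - w q)"
      have wW: "w \<in> W" unfolding W_def fspan_def w_def by blast
      have r0: "\<forall>p. p \<notin> A \<longrightarrow> r p = 0" using f0 Wzero wW unfolding r_def by simp
      have rorth: "\<forall>j\<in>LSt d n (t+1). ip A r (restr A (vvec d n \<gamma> j)) = 0"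
        using c unfolding r_def w_def by simp
      define \<phi> where "\<phi> = restr (JSt d n t) r"
      have dr: "dirich d n \<gamma> \<phi> r" unfolding dirich_def
      proof (intro conjI ballI allI impI)
        fix p assume pD: "p \<in> Dom d n"
        then have pN: "p \<in> Nodes d n" unfolding Nodes_def by auto
        have "(\<Sum>q\<in>Nbr d n p. \<gamma> p q * (r q - r p)) = (\<Sum>q\<in>Nodes d n. vvec d n \<gamma> p q * r q)"
          by (rule harm_vvec[OF pN])
        also have "\<dots> = (\<Sum>q\<in>A. vvec d n \<gamma> p q * r q)"
          using AN r0 finite_Nodes by (intro sum.mono_neutral_right) auto
        also have "\<dots> = 0"
        proof (cases "ssum d p \<le> t + 1")
          case True
          then have "p \<in> LSt d n (t+1)" using pD unfolding LSt_def by auto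
          then have "ip A r (restr A (vvec d n \<gamma> p)) = 0" using rorth by blast
          moreover have "ip A r (restr A (vvec d n \<gamma> p)) = (\<Sum>q\<in>A. vvec d n \<gamma> p q * r q)"
            unfolding ip_def restr_def by (intro sum.cong) auto
          ultimately show ?thesis by simp
        next
          case False
          have "vvec d n \<gamma> p q = 0" if q: "q \<in> A" for q
          proof -
            have "q \<noteq> p" using q ADom[OF pD] False by auto
            moreover have "q \<notin> Nbr d n p"
            proof
              assume qn: "q \<in> Nbr d n p"
              then have "ssum d q \<ge> t + 1" using Nbr_ssum[OF qn] False by auto
              then show False using NA[OF pD qn _] False q by auto
            qed
            ultimately show ?thesis unfolding vvec_def by simp
          qed
          then show ?thesis by simp
        qed
        finally show "(\<Sum>q\<in>Nbr d n p. \<gamma> p q * (r q - r p)) = 0" .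
      next
        fix p assume pB: "p \<in> Bdry d n"
        show "r p = \<phi> p"
        proof (cases "p \<in> JSt d n t")
          case True then show ?thesis unfolding \<phi>_def restr_def by simp
        next
          case False
          then have "p \<notin> A" using pB Dom_Bdry_disj LD unfolding A_def by blast
          then show ?thesis using r0 False unfolding \<phi>_def restr_def by simp
        qed
      next
        fix p assume "p \<notin> Nodes d n"
        then show "r p = 0" using AN r0 by blast
      qed
      have Sr: "Sgam d n \<gamma> \<phi> = r" by (rule Sgam_unique[OF d1 cond dr])
      have "\<phi> \<in> kerT1 d n \<gamma> t" unfolding kerT1_def
      proof (intro CollectI conjI allI impI ballI)
        fix p assume "p \<notin> JSt d n t" then show "\<phi> p = 0" unfolding \<phi>_def restr_def by simp
      next
        fix p assume "p \<in> Lt d n (t + 1)"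
        then have "p \<in> Dom d n" "ssum d p = t + 1" unfolding Lt_def by auto
        then have "p \<notin> A" using ADom by simp
        then show "Sgam d n \<gamma> \<phi> p = 0" using Sr r0 by simp
      qed
      moreover have "restr (JSt d n t \<union> LSt d n t) (Sgam d n \<gamma> \<phi>) = r"
        unfolding Sr AU restr_def using r0 by (auto simp: fun_eq_iff)
      ultimately have rU: "r \<in> Ut d n \<gamma> t" unfolding Ut_def by (metis image_eqI)
      have "f = (\<lambda>q. r q + w q)" unfolding r_def by simp
      then show "f \<in> {(\<lambda>q. u q + w q) | u w. u \<in> Ut d n \<gamma> t \<and> w \<in> W}" using rU wW by blast
    qed
  qed
  show ?thesis using part1 part2 part3 by blast
qed

end
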